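(* With $S^\pm$ as defined in the context and $P_k$ the projectors of the Veronese sequence, for $0\le k\le 2s-1$ one has $\operatorname{tr}(S^+P_kS^-)\ne0$ and $P_{k+1}=\frac{S^+P_kS^-}{\operatorname{tr}(S^+P_kS^-)}$, and for $1\le k\le 2s$ one has $\operatorname{tr}(S^-P_kS^+)\neq 0$ and $P_{k-1}=\frac{S^-P_kS^+}{\operatorname{tr}(S^-P_kS^+)}$.
   Context: Let $2s\in\mathbb{Z}_{>0}$, $\xi_\pm=\xi^1\pm i\xi^2$ with $\xi_-=\overline{\xi_+}$, $\partial=\frac12(\partial_{\xi^1}-i\partial_{\xi^2})$. Matrix indices run over $0,\dots,2s$. Spin-$s$ matrices: $(\sigma^z)_{ij}=(s-i)\delta_{ij}$, $(\sigma^+)_{ij}=\sqrt{(2s-j+1)j}\,\delta_{i,j-1}$, $(\sigma^-)_{ij}=\sqrt{(2s-i+1)i}\,\delta_{i-1,j}$; $S^+=\frac{1}{1+\xi_+\xi_-}(2\xi_-\sigma^z-\sigma^-+\xi_-^2\sigma^+)$, $S^-=\frac{1}{1+\xi_+\xi_-}(2\xi_+\sigma^z+\xi_+^2\sigma^--\sigma^+)$. Veronese sequence: $(f_0)_j=\sqrt{\binom{2s}{j}}\xi_+^j$, $f_{k+1}=\big(\mathbf 1_{2s+1}-\frac{f_kf_k^\dagger}{f_k^\dagger f_k}\big)\partial f_k$; $P_k=\frac{f_kf_k^\dagger}{f_k^\dagger f_k}$. *)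

theory Defs
  imports "HOL-Analysis.Analysis" "Jordan_Normal_Form.Matrix"
begin

text \<open>Spin-s objects with n = 2s a positive natural number; matrix indices 0..n.\<close>

definition sigma_z :: "nat \<Rightarrow> complex mat" where
  "sigma_z n = mat (n+1) (n+1) (\<lambda>(i,j). if i = j then of_real (real n / 2 - real i) else 0)"

definition sigma_plus :: "nat \<Rightarrow> complex mat" where
  "sigma_plus n = mat (n+1) (n+1)
     (\<lambda>(i,j). if i + 1 = j then of_real (sqrt (real ((n - j + 1) * j))) else 0)"

definition sigma_minus :: "nat \<Rightarrow> complex mat" where
  "sigma_minus n = mat (n+1) (n+1)
     (\<lambda>(i,j). if i = j + 1 then of_real (sqrt (real ((n - i + 1) * i))) else 0)"

text \<open>S^+ and S^- at the point xi_+ = z (so xi_- = cnj z).\<close>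
definition S_plus :: "nat \<Rightarrow> complex \<Rightarrow> complex mat" where
  "S_plus n z = (1 / (1 + z * cnj z)) \<cdot>\<^sub>m
     ((2 * cnj z) \<cdot>\<^sub>m sigma_z n - sigma_minus n + (cnj z ^ 2) \<cdot>\<^sub>m sigma_plus n)"

definition S_minus :: "nat \<Rightarrow> complex \<Rightarrow> complex mat" where
  "S_minus n z = (1 / (1 + z * cnj z)) \<cdot>\<^sub>m
     ((2 * z) \<cdot>\<^sub>m sigma_z n + (z ^ 2) \<cdot>\<^sub>m sigma_minus n - sigma_plus n)"

definition wirtinger :: "(complex \<Rightarrow> complex) \<Rightarrow> complex \<Rightarrow> complex" where
  "wirtinger g z =
     (vector_derivative (\<lambda>t::real. g (z + of_real t)) (at 0)
      - \<i> * vector_derivative (\<lambda>t::real. g (z + \<i> * of_real t)) (at 0)) / 2"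

definition wirtinger_vec :: "nat \<Rightarrow> (complex \<Rightarrow> complex vec) \<Rightarrow> complex \<Rightarrow> complex vec" where
  "wirtinger_vec m F z = vec m (\<lambda>j. wirtinger (\<lambda>w. F w $ j) z)"

definition vnorm2 :: "complex vec \<Rightarrow> complex" where
  "vnorm2 v = (\<Sum>i<dim_vec v. cnj (v $ i) * v $ i)"

definition proj :: "complex vec \<Rightarrow> complex mat" where
  "proj v = (1 / vnorm2 v) \<cdot>\<^sub>m mat (dim_vec v) (dim_vec v) (\<lambda>(i,j). v $ i * cnj (v $ j))"

primrec veronese :: "nat \<Rightarrow> nat \<Rightarrow> complex \<Rightarrow> complex vec" where
  "veronese n 0 = (\<lambda>z. vec (n+1) (\<lambda>j. of_real (sqrt (real (n choose j))) * z ^ j))"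
| "veronese n (Suc k) = (\<lambda>z. (1\<^sub>m (n+1) - proj (veronese n k z))
                               *\<^sub>v wirtinger_vec (n+1) (veronese n k) z)"

definition mtrace :: "complex mat \<Rightarrow> complex" where
  "mtrace A = (\<Sum>i<dim_row A. A $$ (i,i))"

definition P :: "nat \<Rightarrow> nat \<Rightarrow> complex \<Rightarrow> complex mat" where
  "P n k z = proj (veronese n k z)"

end

theory Submission
  imports Defs
begin

definition WD :: "(complex \<Rightarrow> complex) \<Rightarrow> (complex \<Rightarrow> complex) \<Rightarrow> (complex \<Rightarrow> complex) \<Rightarrow> bool" where
  "WD h a b \<longleftrightarrow> (\<forall>z. (h has_derivative (\<lambda>d. a z * d + b z * cnj d)) (at z))"

lemma wirtinger_WD:
  assumes "WD h a b" shows "wirtinger h z = a z"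
proof -
  have d: "(h has_derivative (\<lambda>d. a z * d + b z * cnj d)) (at (z + of_real 0))"
    using assms unfolding WD_def by simp
  have 1: "((\<lambda>t::real. h (z + of_real t)) has_vector_derivative (a z + b z)) (at 0)"
  proof -
    have "((\<lambda>t::real. z + of_real t) has_derivative (\<lambda>t. of_real t)) (at 0)"
      by (auto intro!: derivative_eq_intros bounded_linear.has_derivative[OF bounded_linear_of_real])
    from has_derivative_compose[OF this d] show ?thesis
      unfolding has_vector_derivative_def
      by (simp add: algebra_simps scaleR_conv_of_real)
  qed
  have d2: "(h has_derivative (\<lambda>d. a z * d + b z * cnj d)) (at (z + \<i> * of_real 0))"
    using assms unfolding WD_def by simp
  have 2: "((\<lambda>t::real. h (z + \<i> * of_real t)) has_vector_derivative (\<i> * a z - \<i> * b z)) (at 0)"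
  proof -
    have "((\<lambda>t::real. z + \<i> * of_real t) has_derivative (\<lambda>t. \<i> * of_real t)) (at 0)"
      by (auto intro!: derivative_eq_intros bounded_linear.has_derivative[OF bounded_linear_of_real])
    from has_derivative_compose[OF this d2] show ?thesis
      unfolding has_vector_derivative_def
      by (simp add: algebra_simps scaleR_conv_of_real)
  qed
  show ?thesis unfolding wirtinger_def vector_derivative_at[OF 1] vector_derivative_at[OF 2]
    by (simp add: algebra_simps)
qed

lemma WD_const: "WD (\<lambda>z. c) (\<lambda>_. 0) (\<lambda>_. 0)"
  unfolding WD_def by (auto intro!: derivative_eq_intros)
lemma WD_id: "WD (\<lambda>z. z) (\<lambda>_. 1) (\<lambda>_. 0)"
  unfolding WD_def by (auto intro!: derivative_eq_intros)
lemma WD_cnj: "WD (\<lambda>z. cnj z) (\<lambda>_. 0) (\<lambda>_. 1)"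
  unfolding WD_def by (auto intro!: derivative_eq_intros)
lemma WD_add: "WD f a b \<Longrightarrow> WD g a' b' \<Longrightarrow> WD (\<lambda>z. f z + g z) (\<lambda>z. a z + a' z) (\<lambda>z. b z + b' z)"
  unfolding WD_def by (auto intro!: derivative_eq_intros simp: algebra_simps)
lemma WD_mult: "WD f a b \<Longrightarrow> WD g a' b' \<Longrightarrow>
   WD (\<lambda>z. f z * g z) (\<lambda>z. f z * a' z + a z * g z) (\<lambda>z. f z * b' z + b z * g z)"
  unfolding WD_def by (auto intro!: derivative_eq_intros simp: algebra_simps)
lemma WD_inverse: assumes "WD f a b" "\<And>z. f z \<noteq> 0" shows
   "WD (\<lambda>z. inverse (f z)) (\<lambda>z. - a z / (f z)^2) (\<lambda>z. - b z / (f z)^2)"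
  unfolding WD_def
proof
  fix z
  have "(f has_derivative (\<lambda>d. a z * d + b z * cnj d)) (at z)" using assms(1) unfolding WD_def by auto
  from Deriv.has_derivative_inverse[OF assms(2) this]
  show "((\<lambda>z. inverse (f z)) has_derivative (\<lambda>d. - a z / (f z)\<^sup>2 * d + - b z / (f z)\<^sup>2 * cnj d)) (at z)"
    apply (rule has_derivative_eq_rhs)
    using assms(2)[of z] by (auto simp: field_simps power2_eq_square)
qed

definition sq :: "nat \<Rightarrow> nat \<Rightarrow> complex" where
  "sq n i = complex_of_real (sqrt (real ((n - i) * (i + 1))))"
definition sqd :: "nat \<Rightarrow> nat \<Rightarrow> complex" where
  "sqd n i = complex_of_real (sqrt (real ((n + 1 - i) * i)))"
lemma sqd_Suc[simp]: "sqd n (Suc i) = sq n i"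
  unfolding sq_def sqd_def by (simp add: mult.commute)
lemma sq_sq: "sq n i * sq n i = of_nat ((n - i) * (i + 1))"
  unfolding sq_def by (simp flip: of_real_mult) (simp add: of_real_mult)
lemma sqd_sqd: "sqd n i * sqd n i = of_nat ((n + 1 - i) * i)"
  unfolding sqd_def by (simp flip: of_real_mult) (simp add: of_real_mult)
lemma sqd_sq_pred: "sqd n i * sq n (i - 1) = of_nat ((n + 1 - i) * i)"
  by (cases i) (simp add: sqd_def, simp add: sq_sq mult.commute)

definition up :: "nat \<Rightarrow> (nat \<Rightarrow> complex) \<Rightarrow> nat \<Rightarrow> complex" where
  "up n v i = sq n i * v (Suc i)"
definition dn :: "nat \<Rightarrow> (nat \<Rightarrow> complex) \<Rightarrow> nat \<Rightarrow> complex" where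
  "dn n v i = sqd n i * v (i - 1)"
definition zz :: "nat \<Rightarrow> (nat \<Rightarrow> complex) \<Rightarrow> nat \<Rightarrow> complex" where
  "zz n v i = (of_nat n / 2 - of_nat i) * v i"
definition Top :: "nat \<Rightarrow> complex \<Rightarrow> (nat \<Rightarrow> complex) \<Rightarrow> nat \<Rightarrow> complex" where
  "Top n w v i = 2 * w * zz n v i - dn n v i + w^2 * up n v i"
definition Rop :: "nat \<Rightarrow> complex \<Rightarrow> (nat \<Rightarrow> complex) \<Rightarrow> nat \<Rightarrow> complex" where
  "Rop n z v i = 2 * z * zz n v i + z^2 * dn n v i - up n v i"
definition Hop :: "nat \<Rightarrow> complex \<Rightarrow> complex \<Rightarrow> (nat \<Rightarrow> complex) \<Rightarrow> nat \<Rightarrow> complex" where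
  "Hop n z w v i = z * dn n v i + w * up n v i + (1 - z * w) * zz n v i"
definition supp :: "nat \<Rightarrow> (nat \<Rightarrow> complex) \<Rightarrow> bool" where
  "supp n v \<longleftrightarrow> (\<forall>i>n. v i = 0)"

lemma C1_id:
  fixes a b c d e z w M I J v0 vm1 vm2 v1 v2 vS vT :: complex
  shows "2 * z * ((M - I) * (2 * w * ((M - I) * v0) - b * vm1 + w\<^sup>2 * (a * v1))) +
    z\<^sup>2 * (b * (2 * w * ((M - J) * vm1) - d * vm2 + w\<^sup>2 * (c * vS))) -
    a * (2 * w * ((M - (1 + I)) * v1) - a * vT + w\<^sup>2 * (e * v2)) -
    (2 * w * ((M - I) * (2 * z * ((M - I) * v0) + z\<^sup>2 * (b * vm1) - a * v1)) -
    b * (2 * z * ((M - J) * vm1) + z\<^sup>2 * (d * vm2) - c * vS) +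
    w\<^sup>2 * (a * (2 * z * ((M - (1 + I)) * v1) + z\<^sup>2 * (a * vT) - e * v2)) +
    2 * (1 + z * w) * (z * (b * vm1) + w * (a * v1) + (1 - z * w) * ((M - I) * v0)))
   = (a * a * vT - b * c * vS - 2 * (M - I) * v0) * (1 - w*w*z*z)
      + (b * (I - 1) - b * J) * vm1 * 2 * z * (1 + w*z)"
  by (simp add: algebra_simps power2_eq_square; simp add: field_simps)

lemma comm_facts:
  assumes "supp n v"
  shows "sq n i * sq n i * v (Suc i - 1) - sqd n i * sq n (i - 1) * v (Suc (i - 1))
           - 2 * (of_nat n / 2 - of_nat i) * v i = 0"
    and "sqd n i * of_nat (i - 1) = sqd n i * (of_nat i - 1)"
proof -
  show "sqd n i * of_nat (i - 1) = sqd n i * (of_nat i - 1)"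
    by (cases i) (auto simp: sqd_def)
  show "sq n i * sq n i * v (Suc i - 1) - sqd n i * sq n (i - 1) * v (Suc (i - 1))
           - 2 * (of_nat n / 2 - of_nat i) * v i = 0"
  proof (cases "i \<le> n")
    case True
    define N where "N = (of_nat n :: complex)"
    define I where "I = (of_nat i :: complex)"
    have T1: "i \<le> n + 1" using True by simp
    have a: "sq n i * sq n i = (N - I) * (I + 1)"
      unfolding sq_sq N_def I_def by (simp only: of_nat_mult of_nat_diff[OF True] of_nat_add of_nat_1)
    have b: "sqd n i * sq n (i - 1) = (N + 1 - I) * I"
      unfolding sqd_sq_pred N_def I_def by (simp only: of_nat_mult of_nat_diff[OF T1] of_nat_add of_nat_1)
    have G: "sqd n i * sq n (i - 1) * v (Suc (i - 1)) = sqd n i * sq n (i - 1) * v i"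
      by (cases i) (auto simp: sqd_def)
    show ?thesis unfolding G unfolding b a N_def I_def
      by (simp add: algebra_simps)
  next
    case False
    have "sq n i = 0" "sqd n i = 0" using False by (auto simp: sq_def sqd_def)
    moreover have "v i = 0" using False assms by (auto simp: supp_def)
    ultimately show ?thesis by simp
  qed
qed

lemma C1:
  assumes "supp n v"
  shows "Rop n z (Top n w v) i = Top n w (Rop n z v) i + 2 * (1 + z * w) * Hop n z w v i"
proof -
  note h = comm_facts[OF assms, of i]
  have "Rop n z (Top n w v) i - (Top n w (Rop n z v) i + 2 * (1 + z * w) * Hop n z w v i)
    = (sq n i * sq n i * v (Suc i - 1) - sqd n i * sq n (i - 1) * v (Suc (i - 1))
           - 2 * (of_nat n / 2 - of_nat i) * v i) * (1 - w*w*z*z)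
      + (sqd n i * (of_nat i - 1) - sqd n i * of_nat (i - 1)) * v (i - 1) * 2 * z * (1 + w*z)"
    unfolding Rop_def Top_def Hop_def up_def dn_def zz_def sqd_Suc of_nat_Suc by (rule C1_id)
  also have "\<dots> = 0" unfolding h by simp
  finally show ?thesis by simp
qed

lemma C2:
  assumes "supp n v"
  shows "Hop n z w (Top n w v) i = Top n w (Hop n z w v) i - (1 + z * w) * Top n w v i"
proof -
  note h = comm_facts[OF assms, of i]
  have "Hop n z w (Top n w v) i - (Top n w (Hop n z w v) i - (1 + z * w) * Top n w v i)
    = - (sq n i * sq n i * v (Suc i - 1) - sqd n i * sq n (i - 1) * v (Suc (i - 1))
           - 2 * (of_nat n / 2 - of_nat i) * v i) * w * (1 + w*z)
      + (sqd n i * (of_nat i - 1) - sqd n i * of_nat (i - 1)) * v (i - 1) * (1 + w*z)"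
    unfolding Hop_def Top_def up_def dn_def zz_def sqd_Suc of_nat_Suc by (simp add: algebra_simps power2_eq_square; simp add: field_simps)
  also have "\<dots> = 0" unfolding h by simp
  finally show ?thesis by simp
qed

definition sb :: "nat \<Rightarrow> nat \<Rightarrow> complex" where
  "sb n i = complex_of_real (sqrt (real (n choose i)))"

lemma binom_rel: "(n - i) * (n choose i) = Suc i * (n choose Suc i)"
  using binomial_absorb_comp[of n i] binomial_absorption[of i n] by simp

lemma B2: "sq n i * sb n (Suc i) = of_nat (n - i) * sb n i"
proof -
  have e: "real ((n - i) * (i + 1)) * real (n choose Suc i) = real (n - i) * real (n - i) * real (n choose i)"
    using binom_rel[of n i] by (metis (mono_tags, lifting) Suc_eq_plus1 mult.assoc of_nat_mult)
  have "sqrt (real ((n - i) * (i + 1))) * sqrt (real (n choose Suc i)) = real (n - i) * sqrt (real (n choose i))"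
    unfolding real_sqrt_mult[symmetric] e by (simp add: real_sqrt_mult)
  then show ?thesis unfolding sq_def sb_def by (metis of_real_mult of_real_of_nat_eq)
qed

lemma B1: "sqd n i * sb n (i - 1) = of_nat i * sb n i"
proof (cases i)
  case 0 then show ?thesis by (simp add: sqd_def)
next
  case (Suc j)
  have e: "real ((n - j) * (j + 1)) * real (n choose j) = real (Suc j) * real (Suc j) * real (n choose Suc j)"
    using binom_rel[of n j] by (metis (mono_tags, lifting) Suc_eq_plus1 mult.assoc mult.commute of_nat_mult)
  have "sqrt (real ((n - j) * (j + 1))) * sqrt (real (n choose j)) = real (Suc j) * sqrt (real (n choose Suc j))"
    unfolding real_sqrt_mult[symmetric] e by (simp add: real_sqrt_mult)
  then show ?thesis unfolding Suc sqd_Suc sq_def sb_def by (metis diff_Suc_1 of_real_mult of_real_of_nat_eq)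
qed

definition G0 :: "nat \<Rightarrow> complex \<Rightarrow> nat \<Rightarrow> complex" where
  "G0 n z i = sb n i * z ^ i"

definition Gk :: "nat \<Rightarrow> nat \<Rightarrow> complex \<Rightarrow> complex \<Rightarrow> nat \<Rightarrow> complex" where
  "Gk n k z w = (Top n w ^^ k) (G0 n z)"

lemma Gk_0: "Gk n 0 z w = G0 n z" by (simp add: Gk_def)
lemma Gk_Suc: "Gk n (Suc k) z w = Top n w (Gk n k z w)" by (simp add: Gk_def)

lemma supp_G0: "supp n (G0 n z)"
  by (simp add: supp_def G0_def sb_def)

lemma supp_Top: "supp n v \<Longrightarrow> supp n (Top n w v)"
  unfolding supp_def Top_def zz_def dn_def up_def
proof (intro allI impI)
  fix i assume v: "\<forall>i>n. v i = 0" and i: "n < i"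
  have "sq n i = 0" using i by (simp add: sq_def)
  moreover have "sqd n i * v (i - 1) = 0"
  proof (cases "i = Suc n")
    case True then show ?thesis by (simp add: sqd_def)
  next
    case False then show ?thesis using v i by simp
  qed
  ultimately show "2 * w * ((of_nat n / 2 - of_nat i) * v i) - sqd n i * v (i - 1) + w\<^sup>2 * (sq n i * v (Suc i)) = 0"
    using v i by simp
qed

lemma supp_Gk: "supp n (Gk n k z w)"
  by (induction k) (auto simp: Gk_0 Gk_Suc supp_G0 supp_Top)

lemma R_G0: "Rop n z (G0 n z) i = 0"
proof -
  have "sqd n i * G0 n z (i - 1) * z = of_nat i * sb n i * z ^ i"
  proof (cases i)
    case 0 then show ?thesis by (simp add: sqd_def)
  next
    case (Suc j)
    have "sqd n i * G0 n z (i - 1) * z = (sqd n i * sb n (i - 1)) * (z^(i-1) * z)"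
      by (simp add: G0_def ac_simps)
    also have "\<dots> = of_nat i * sb n i * z ^ i" unfolding B1 using Suc by simp
    finally show ?thesis .
  qed
  note X = this
  have "sq n i * G0 n z (Suc i) = of_nat (n - i) * sb n i * z ^ Suc i"
    unfolding G0_def using B2[of n i] by (metis mult.assoc)
  moreover have "of_nat (n - i) * sb n i = (of_nat n - of_nat i) * sb n i"
    by (cases "i \<le> n") (auto simp: of_nat_diff sb_def)
  ultimately have Y: "sq n i * G0 n z (Suc i) = (of_nat n - of_nat i) * sb n i * z ^ Suc i" by simp
  have "Rop n z (G0 n z) i = 2*z*((of_nat n/2 - of_nat i) * G0 n z i) + z * (sqd n i * G0 n z (i - 1) * z) - sq n i * G0 n z (Suc i)"
    unfolding Rop_def zz_def dn_def up_def by (simp add: power2_eq_square ac_simps)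
  also have "\<dots> = 0" unfolding X Y unfolding G0_def by (simp add: field_simps)
  finally show ?thesis .
qed

lemma H_G0: "Hop n z w (G0 n z) i = (1 + z * w) * (of_nat n / 2) * G0 n z i"
proof -
  have "sqd n i * G0 n z (i - 1) * z = of_nat i * sb n i * z ^ i"
  proof (cases i)
    case 0 then show ?thesis by (simp add: sqd_def)
  next
    case (Suc j)
    have "sqd n i * G0 n z (i - 1) * z = (sqd n i * sb n (i - 1)) * (z^(i-1) * z)"
      by (simp add: G0_def ac_simps)
    also have "\<dots> = of_nat i * sb n i * z ^ i" unfolding B1 using Suc by simp
    finally show ?thesis .
  qed
  note X = this
  have "sq n i * G0 n z (Suc i) = of_nat (n - i) * sb n i * z ^ Suc i"
    unfolding G0_def using B2[of n i] by (metis mult.assoc)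
  moreover have "of_nat (n - i) * sb n i = (of_nat n - of_nat i) * sb n i"
    by (cases "i \<le> n") (auto simp: of_nat_diff sb_def)
  ultimately have Y: "sq n i * G0 n z (Suc i) = (of_nat n - of_nat i) * sb n i * z ^ Suc i" by simp
  have "Hop n z w (G0 n z) i = (sqd n i * G0 n z (i - 1) * z) + w * (sq n i * G0 n z (Suc i)) + (1 - z * w) * ((of_nat n/2 - of_nat i) * G0 n z i)"
    unfolding Hop_def zz_def dn_def up_def by (simp add: ac_simps)
  also have "\<dots> = (1 + z * w) * (of_nat n / 2) * G0 n z i" unfolding X Y unfolding G0_def by (simp add: field_simps)
  finally show ?thesis .
qed

lemma Top_scale: "Top n w (\<lambda>i. c * g i) i = c * Top n w g i"
  unfolding Top_def zz_def dn_def up_def by (simp add: algebra_simps)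
lemma Top_zero: "Top n w (\<lambda>i. 0) i = 0"
  unfolding Top_def zz_def dn_def up_def by simp

lemma H_Gk: "Hop n z w (Gk n k z w) i = (1 + z * w) * (of_nat n / 2 - of_nat k) * Gk n k z w i"
proof (induction k arbitrary: i)
  case 0 then show ?case by (simp add: Gk_0 H_G0)
next
  case (Suc k)
  have e: "Hop n z w (Gk n k z w) = (\<lambda>i. ((1 + z * w) * (of_nat n / 2 - of_nat k)) * Gk n k z w i)"
    using Suc.IH by auto
  show ?case unfolding Gk_Suc C2[OF supp_Gk] e Top_scale
    by (simp add: algebra_simps)
qed

definition mu :: "nat \<Rightarrow> nat \<Rightarrow> complex \<Rightarrow> complex \<Rightarrow> complex" where
  "mu n k z w = (1 + z * w)^2 * of_nat (Suc k) * (of_nat n - of_nat k)"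

lemma R_Gk: "Rop n z (Gk n (Suc k) z w) i = mu n k z w * Gk n k z w i"
proof (induction k arbitrary: i)
  case 0
  have e: "Rop n z (G0 n z) = (\<lambda>i. 0)" using R_G0 by auto
  show ?case unfolding Gk_Suc Gk_0 C1[OF supp_G0] e Top_zero H_G0 mu_def
    by (simp add: algebra_simps power2_eq_square)
next
  case (Suc k)
  have e: "Rop n z (Gk n (Suc k) z w) = (\<lambda>i. mu n k z w * Gk n k z w i)"
    using Suc.IH by auto
  have "Rop n z (Gk n (Suc (Suc k)) z w) i =
     mu n k z w * Gk n (Suc k) z w i + 2 * (1 + z * w) * ((1 + z * w) * (of_nat n / 2 - of_nat (Suc k)) * Gk n (Suc k) z w i)"
    unfolding Gk_Suc[of n "Suc k"] C1[OF supp_Gk] e Top_scale H_Gk unfolding Gk_Suc ..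
  also have "\<dots> = mu n (Suc k) z w * Gk n (Suc k) z w i"
    unfolding mu_def by (simp add: algebra_simps power2_eq_square; simp add: field_simps)
  finally show ?case .
qed

definition ip :: "nat \<Rightarrow> (nat \<Rightarrow> complex) \<Rightarrow> (nat \<Rightarrow> complex) \<Rightarrow> complex" where
  "ip n u v = (\<Sum>i<Suc n. cnj (u i) * v i)"

lemma sum_shift: "(\<Sum>i<Suc m. f i) = f 0 + (\<Sum>i<m. f (Suc i))"
  by (induction m) (auto simp: ac_simps)

lemma cnj_sq[simp]: "cnj (sq n i) = sq n i" by (simp add: sq_def)
lemma cnj_sqd[simp]: "cnj (sqd n i) = sqd n i" by (simp add: sqd_def)
lemma sq_n[simp]: "sq n n = 0" by (simp add: sq_def)
lemma sqd_0[simp]: "sqd n 0 = 0" by (simp add: sqd_def)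

lemma ip_up: "ip n u (up n v) = ip n (dn n u) v"
proof -
  have "ip n u (up n v) = (\<Sum>i<n. cnj (u i) * (sq n i * v (Suc i)))"
    unfolding ip_def up_def by simp
  also have "\<dots> = ip n (dn n u) v"
    unfolding ip_def dn_def sum_shift by (simp add: ac_simps)
  finally show ?thesis .
qed

lemma ip_dn: "ip n u (dn n v) = ip n (up n u) v"
proof -
  have "ip n u (dn n v) = (\<Sum>i<n. cnj (u (Suc i)) * (sq n i * v i))"
    unfolding ip_def dn_def sum_shift by simp
  also have "\<dots> = ip n (up n u) v"
    unfolding ip_def up_def by (simp add: ac_simps)
  finally show ?thesis .
qed

lemma ip_T: "ip n u (Top n (cnj z) v) = ip n (Rop n z u) v"
proof -
  have "ip n u (Top n (cnj z) v) = 2 * cnj z * (\<Sum>i<Suc n. cnj (u i) * zz n v i) - ip n u (dn n v) + (cnj z)^2 * ip n u (up n v)"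
    unfolding ip_def Top_def by (simp add: algebra_simps sum_distrib_left sum.distrib sum_subtractf)
  also have "\<dots> = ip n (Rop n z u) v"
    unfolding ip_dn ip_up unfolding ip_def Rop_def zz_def
    by (simp add: algebra_simps sum_distrib_left sum.distrib sum_subtractf)
  finally show ?thesis .
qed

lemma ip_scale: "ip n (\<lambda>i. c * u i) v = cnj c * ip n u v"
  unfolding ip_def by (simp add: sum_distrib_left distrib_left ac_simps)

abbreviation "gz n k z \<equiv> Gk n k z (cnj z)"

lemma orth: "ip n (gz n k z) (gz n (Suc k) z) = 0"
proof (induction k)
  case 0
  have e: "Rop n z (G0 n z) = (\<lambda>i. 0)" using R_G0 by auto
  show ?case unfolding Gk_Suc ip_T Gk_0 e by (simp add: ip_def)
next
  case (Suc k)
  have e: "Rop n z (gz n (Suc k) z) = (\<lambda>i. mu n k z (cnj z) * gz n k z i)"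
    using R_Gk by auto
  show ?case unfolding Gk_Suc[of n "Suc k"] ip_T e ip_scale Suc.IH by simp
qed

lemma nm_Suc: "ip n (gz n (Suc k) z) (gz n (Suc k) z) = cnj (mu n k z (cnj z)) * ip n (gz n k z) (gz n k z)"
proof -
  have e: "Rop n z (gz n (Suc k) z) = (\<lambda>i. mu n k z (cnj z) * gz n k z i)"
    using R_Gk by auto
  have "ip n (gz n (Suc k) z) (gz n (Suc k) z) = ip n (gz n (Suc k) z) (Top n (cnj z) (gz n k z))"
    by (simp add: Gk_Suc)
  also have "\<dots> = cnj (mu n k z (cnj z)) * ip n (gz n k z) (gz n k z)"
    unfolding ip_T e ip_scale ..
  finally show ?thesis .
qed

lemma q_ne0: "1 + z * cnj z \<noteq> 0"
proof -
  have "Re (1 + z * cnj z) = 1 + (Re z)^2 + (Im z)^2" by (simp add: complex_mult_cnj)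
  then have r: "Re (1 + z * cnj z) \<ge> 1" by (simp add: add_nonneg_nonneg)
  show ?thesis
  proof
    assume "1 + z * cnj z = 0"
    then have "Re (1 + z * cnj z) = 0" by simp
    with r show False by linarith
  qed
qed

lemma mu_ne0: "k < n \<Longrightarrow> mu n k z (cnj z) \<noteq> 0"
proof -
  assume k: "k < n"
  have a: "of_nat (Suc k) \<noteq> (0::complex)" by (simp only: of_nat_eq_0_iff)
  have b: "of_nat n - of_nat k \<noteq> (0::complex)" using k by simp
  show ?thesis unfolding mu_def using q_ne0[of z] a b by (simp only: mult_eq_0_iff power_eq_0_iff) simp
qed

lemma ip_self_Re: "Re (ip n u u) = (\<Sum>i<Suc n. (Re (u i))^2 + (Im (u i))^2)"
  unfolding ip_def by (simp add: Re_sum power2_eq_square)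

lemma ip_self_ne0: "u 0 \<noteq> 0 \<Longrightarrow> ip n u u \<noteq> 0"
proof -
  assume "u 0 \<noteq> 0"
  have "Re (ip n u u) \<ge> (Re (u 0))^2 + (Im (u 0))^2"
    unfolding ip_self_Re sum_shift by (simp add: sum_nonneg)
  moreover have "(Re (u 0))^2 + (Im (u 0))^2 > 0" using \<open>u 0 \<noteq> 0\<close> complex_neq_0 by blast
  ultimately show ?thesis by auto
qed

lemma nm_ne0: "k \<le> n \<Longrightarrow> ip n (gz n k z) (gz n k z) \<noteq> 0"
proof (induction k)
  case 0 show ?case unfolding Gk_0 by (rule ip_self_ne0) (simp add: G0_def sb_def)
next
  case (Suc k) then show ?case using mu_ne0[of k n z] by (simp add: nm_Suc)
qed

definition WDa :: "(complex \<Rightarrow> complex) \<Rightarrow> (complex \<Rightarrow> complex) \<Rightarrow> bool" where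
  "WDa f a \<longleftrightarrow> (\<exists>b. WD f a b)"
definition WDx :: "(complex \<Rightarrow> complex) \<Rightarrow> bool" where
  "WDx f \<longleftrightarrow> (\<exists>a. WDa f a)"

lemma WDa_wirtinger: "WDa f a \<Longrightarrow> wirtinger f z = a z"
  unfolding WDa_def using wirtinger_WD by blast

lemma WDa_add: "WDa f a \<Longrightarrow> WDa g a' \<Longrightarrow> WDa (\<lambda>z. f z + g z) (\<lambda>z. a z + a' z)"
  unfolding WDa_def using WD_add by blast
lemma WD_neg: "WD f a b \<Longrightarrow> WD (\<lambda>z. - f z) (\<lambda>z. - a z) (\<lambda>z. - b z)"
  unfolding WD_def by (auto intro!: derivative_eq_intros simp: algebra_simps)
lemma WDa_diff: "WDa f a \<Longrightarrow> WDa g a' \<Longrightarrow> WDa (\<lambda>z. f z - g z) (\<lambda>z. a z - a' z)"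
  using WDa_add[of f a "\<lambda>z. - g z" "\<lambda>z. - a' z"] WD_neg unfolding WDa_def by fastforce
lemma WDa_cmult: "WDa f a \<Longrightarrow> WDa (\<lambda>z. c * f z) (\<lambda>z. c * a z)"
  unfolding WDa_def using WD_mult[OF WD_const[of c]] by fastforce
lemma WDa_cnjmult: "WDa f a \<Longrightarrow> WDa (\<lambda>z. cnj z * f z) (\<lambda>z. cnj z * a z)"
  unfolding WDa_def using WD_mult[OF WD_cnj] by fastforce
lemma WDa_ext: "WDa f a \<Longrightarrow> (\<And>z. f z = g z) \<Longrightarrow> (\<And>z. a z = a' z) \<Longrightarrow> WDa g a'"
proof -
  assume "WDa f a" "\<And>z. f z = g z" "\<And>z. a z = a' z"
  then have "f = g" "a = a'" by auto
  with \<open>WDa f a\<close> show ?thesis by simp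
qed

lemma WD_pow: "WD (\<lambda>z. z ^ i) (\<lambda>z. of_nat i * z ^ (i - 1)) (\<lambda>_. 0)"
proof (induction i)
  case 0 then show ?case using WD_const[of 1] by simp
next
  case (Suc i)
  have "WD (\<lambda>z. z * z ^ i) (\<lambda>z. z * (of_nat i * z ^ (i - 1)) + 1 * z ^ i) (\<lambda>z. z * 0 + 0 * z ^ i)"
    using WD_mult[OF WD_id Suc.IH] .
  moreover have "z * (of_nat i * z ^ (i - 1)) + 1 * z ^ i = of_nat (Suc i) * z ^ (Suc i - 1)" for z :: complex
    by (cases i) (auto simp: algebra_simps)
  ultimately show ?case by simp
qed

definition Dk :: "nat \<Rightarrow> nat \<Rightarrow> complex \<Rightarrow> nat \<Rightarrow> complex" where
  "Dk n k z = (Top n (cnj z) ^^ k) (dn n (G0 n z))"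

lemma Dk_Suc: "Dk n (Suc k) z = Top n (cnj z) (Dk n k z)" by (simp add: Dk_def)

lemma dn_G0: "dn n (G0 n z) i = sb n i * (of_nat i * z ^ (i - 1))"
proof -
  have "dn n (G0 n z) i = (sqd n i * sb n (i - 1)) * z ^ (i - 1)"
    unfolding dn_def G0_def by (simp add: ac_simps)
  then show ?thesis unfolding B1 by simp
qed

lemma WDa_g: "WDa (\<lambda>z. gz n k z i) (\<lambda>z. Dk n k z i)"
proof (induction k arbitrary: i)
  case 0
  have "WDa (\<lambda>z. sb n i * z ^ i) (\<lambda>z. sb n i * (of_nat i * z ^ (i - 1)))"
    using WDa_cmult[of "\<lambda>z. z ^ i"] WD_pow unfolding WDa_def by blast
  then show ?case by (simp add: Gk_0 Dk_def G0_def dn_G0)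
next
  case (Suc k)
  have a: "WDa (\<lambda>z. cnj z * (2 * ((of_nat n / 2 - of_nat i) * gz n k z i)))
               (\<lambda>z. cnj z * (2 * ((of_nat n / 2 - of_nat i) * Dk n k z i)))"
    by (intro WDa_cnjmult WDa_cmult Suc.IH)
  have b: "WDa (\<lambda>z. sqd n i * gz n k z (i - 1)) (\<lambda>z. sqd n i * Dk n k z (i - 1))"
    by (intro WDa_cmult Suc.IH)
  have c: "WDa (\<lambda>z. cnj z * (cnj z * (sq n i * gz n k z (Suc i))))
               (\<lambda>z. cnj z * (cnj z * (sq n i * Dk n k z (Suc i))))"
    by (intro WDa_cnjmult WDa_cmult Suc.IH)
  from WDa_add[OF WDa_diff[OF a b] c] show ?case
    by (rule WDa_ext) (simp_all add: Gk_Suc Dk_Suc Top_def zz_def dn_def up_def power2_eq_square ac_simps)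
qed

definition alpha :: "nat \<Rightarrow> complex \<Rightarrow> complex" where
  "alpha n z = of_nat n * cnj z / (1 + z * cnj z)"
definition beta :: "complex \<Rightarrow> complex" where
  "beta z = - 1 / (1 + z * cnj z)^2"

lemma Top_lin: "Top n w (\<lambda>i. a * u i + b * v i) i = a * Top n w u i + b * Top n w v i"
  unfolding Top_def zz_def dn_def up_def by (simp add: algebra_simps)

lemma D0_rel: "dn n (G0 n z) i = alpha n z * G0 n z i + beta z * Top n (cnj z) (G0 n z) i"
proof (cases i)
  case 0
  have "Top n (cnj z) (G0 n z) 0 = 2 * cnj z * (of_nat n / 2) + (cnj z)^2 * (of_nat n * z)"
    unfolding Top_def zz_def dn_def up_def using B2[of n 0] by (simp add: G0_def sb_def)
  define q where "q = 1 + z * cnj z"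
  have q: "q \<noteq> 0" using q_ne0 unfolding q_def .
  have T0: "Top n (cnj z) (G0 n z) 0 = cnj z * of_nat n * q"
    unfolding \<open>Top n (cnj z) (G0 n z) 0 = _\<close> q_def by (simp add: algebra_simps power2_eq_square)
  show ?thesis unfolding 0 T0 alpha_def beta_def q_def[symmetric]
    using q by (simp add: dn_def G0_def sb_def field_simps power2_eq_square)
next
  case (Suc j)
  define q where "q = 1 + z * cnj z"
  have q: "q \<noteq> 0" using q_ne0 unfolding q_def .
  have X: "sqd n i * G0 n z (i - 1) = of_nat i * sb n i * z ^ j"
    using Suc unfolding G0_def by (metis B1 diff_Suc_1 mult.assoc)
  have Y: "sq n i * G0 n z (Suc i) = (of_nat n - of_nat i) * sb n i * z ^ Suc i"
  proof -
    have "sq n i * G0 n z (Suc i) = of_nat (n - i) * sb n i * z ^ Suc i"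
      unfolding G0_def using B2[of n i] by (metis mult.assoc)
    moreover have "of_nat (n - i) * sb n i = (of_nat n - of_nat i) * sb n i"
      by (cases "i \<le> n") (auto simp: of_nat_diff sb_def)
    ultimately show ?thesis by simp
  qed
  have T: "Top n (cnj z) (G0 n z) i = 2 * cnj z * ((of_nat n / 2 - of_nat i) * (sb n i * z ^ Suc j))
      - of_nat i * sb n i * z ^ j + (cnj z)^2 * ((of_nat n - of_nat i) * sb n i * z ^ Suc i)"
    unfolding Top_def zz_def dn_def up_def X Y unfolding G0_def Suc by simp
  have L: "dn n (G0 n z) i = of_nat i * sb n i * z ^ j"
    unfolding dn_def X ..
  have P: "q^2 * (of_nat i * sb n i * z ^ j) = q * (of_nat n * cnj z) * (sb n i * z ^ Suc j)
     - (2 * cnj z * ((of_nat n / 2 - of_nat i) * (sb n i * z ^ Suc j))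
      - of_nat i * sb n i * z ^ j + (cnj z)^2 * ((of_nat n - of_nat i) * sb n i * z ^ Suc i))"
    unfolding q_def Suc by (simp add: algebra_simps power2_eq_square)
  have "of_nat i * sb n i * z ^ j = (q * (of_nat n * cnj z) * (sb n i * z ^ Suc j)
     - (2 * cnj z * ((of_nat n / 2 - of_nat i) * (sb n i * z ^ Suc j))
      - of_nat i * sb n i * z ^ j + (cnj z)^2 * ((of_nat n - of_nat i) * sb n i * z ^ Suc i))) / q^2"
    using P q by (simp add: field_simps)
  also have "\<dots> = alpha n z * G0 n z i + beta z * Top n (cnj z) (G0 n z) i"
    unfolding T unfolding alpha_def beta_def q_def[symmetric] G0_def Suc
    using q by (simp add: field_simps power2_eq_square)
  finally show ?thesis unfolding L .
qed

lemma Dk_rel: "Dk n k z i = alpha n z * gz n k z i + beta z * gz n (Suc k) z i"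
proof (induction k arbitrary: i)
  case 0 show ?case unfolding Dk_def Gk_Suc Gk_0 using D0_rel by simp
next
  case (Suc k)
  have e: "Dk n k z = (\<lambda>i. alpha n z * gz n k z i + beta z * gz n (Suc k) z i)"
    using Suc.IH by auto
  show ?case unfolding Dk_Suc e Top_lin unfolding Gk_Suc ..
qed

lemma mv_index: "i < dim_row A \<Longrightarrow> dim_col A = dim_vec v \<Longrightarrow>
   (A *\<^sub>v v) $ i = (\<Sum>j<dim_vec v. A $$ (i, j) * v $ j)"
  by (simp add: scalar_prod_def atLeast0LessThan)

lemma mm_index: "i < dim_row A \<Longrightarrow> j < dim_col B \<Longrightarrow> dim_col A = dim_row B \<Longrightarrow>
   (A * B) $$ (i, j) = (\<Sum>l<dim_row B. A $$ (i, l) * B $$ (l, j))"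
  by (simp add: scalar_prod_def atLeast0LessThan)

lemma vnorm2_smult: "vnorm2 (c \<cdot>\<^sub>v u) = c * cnj c * vnorm2 u"
  unfolding vnorm2_def by (simp add: sum_distrib_left ac_simps)

lemma dim_proj[simp]: "dim_row (proj v) = dim_vec v" "dim_col (proj v) = dim_vec v"
  by (simp_all add: proj_def)

lemma proj_smult: "c \<noteq> 0 \<Longrightarrow> proj (c \<cdot>\<^sub>v u) = proj u"
  unfolding proj_def vnorm2_smult
  by (rule eq_matI) (auto simp: field_simps)

lemma one_minus_proj_mv:
  assumes "dim_vec v = dim_vec u" "vnorm2 u \<noteq> 0" "i < dim_vec u"
  shows "((1\<^sub>m (dim_vec u) - proj u) *\<^sub>v v) $ i
     = v $ i - u $ i * (\<Sum>j<dim_vec u. cnj (u $ j) * v $ j) / vnorm2 u"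
proof -
  have "((1\<^sub>m (dim_vec u) - proj u) *\<^sub>v v) $ i
     = (\<Sum>j<dim_vec u. ((if i = j then 1 else 0) - 1 / vnorm2 u * (u $ i * cnj (u $ j))) * v $ j)"
    using assms by (subst mv_index) (auto simp: proj_def intro!: sum.cong)
  also have "\<dots> = (\<Sum>j<dim_vec u. (if i = j then v $ j else 0)) - (\<Sum>j<dim_vec u. u $ i * (cnj (u $ j) * v $ j) / vnorm2 u)"
    unfolding sum_subtractf[symmetric] by (rule sum.cong) (auto simp: algebra_simps)
  also have "(\<Sum>j<dim_vec u. (if i = j then v $ j else 0)) = v $ i"
    using assms(3) by (simp add: sum.delta)
  also have "(\<Sum>j<dim_vec u. u $ i * (cnj (u $ j) * v $ j) / vnorm2 u) = u $ i * (\<Sum>j<dim_vec u. cnj (u $ j) * v $ j) / vnorm2 u"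
    by (simp add: sum_distrib_left sum_divide_distrib)
  finally show ?thesis .
qed

definition gv :: "nat \<Rightarrow> nat \<Rightarrow> complex \<Rightarrow> complex vec" where
  "gv n k z = vec (Suc n) (gz n k z)"

lemma dim_gv[simp]: "dim_vec (gv n k z) = Suc n" by (simp add: gv_def)

lemma vnorm2_gv: "vnorm2 (gv n k z) = ip n (gz n k z) (gz n k z)"
  unfolding vnorm2_def ip_def gv_def by simp

definition cc :: "nat \<Rightarrow> complex \<Rightarrow> complex" where
  "cc k z = beta z ^ k"

lemma beta_ne0: "beta z \<noteq> 0" unfolding beta_def using q_ne0[of z] by simp

lemma cc_ne0: "cc k z \<noteq> 0" unfolding cc_def using beta_ne0 by simp

lemma WDx_beta: "WDx beta"
proof -
  have q: "WD (\<lambda>z. 1 + z * cnj z) (\<lambda>z. 0 + (z * 0 + 1 * cnj z)) (\<lambda>z. 0 + (z * 1 + 0 * cnj z))"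
    by (intro WD_add WD_const WD_mult WD_id WD_cnj)
  have q2: "\<exists>a b. WD (\<lambda>z. (1 + z * cnj z) * (1 + z * cnj z)) a b"
    using WD_mult[OF q q] by blast
  then obtain a b where ab: "WD (\<lambda>z. (1 + z * cnj z) * (1 + z * cnj z)) a b" by blast
  have nz: "(1 + z * cnj z) * (1 + z * cnj z) \<noteq> 0" for z using q_ne0[of z] by simp
  have "\<exists>a b. WD (\<lambda>z. - inverse ((1 + z * cnj z) * (1 + z * cnj z))) a b"
    using WD_neg[OF WD_inverse[OF ab nz]] by blast
  moreover have "(\<lambda>z. - inverse ((1 + z * cnj z) * (1 + z * cnj z))) = beta"
    by (rule ext) (simp add: beta_def power2_eq_square divide_inverse)
  ultimately show ?thesis unfolding WDx_def WDa_def by auto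
qed

lemma WDx_mult: "WDx f \<Longrightarrow> WDx h \<Longrightarrow> WDx (\<lambda>z. f z * h z)"
  unfolding WDx_def WDa_def using WD_mult by blast

lemma WDx_cc: "WDx (cc k)"
proof (induction k)
  case 0 then show ?case unfolding cc_def WDx_def WDa_def using WD_const[of 1] by auto
next
  case (Suc k)
  have "WDx (\<lambda>z. cc k z * beta z)" using WDx_mult[OF Suc.IH WDx_beta] .
  moreover have "(\<lambda>z. cc k z * beta z) = cc (Suc k)" by (rule ext) (simp add: cc_def)
  ultimately show ?case by simp
qed

lemma wirtinger_prod: "WDx f \<Longrightarrow> WDa h a \<Longrightarrow> wirtinger (\<lambda>z. f z * h z) z = f z * a z + wirtinger f z * h z"
proof -
  assume "WDx f" "WDa h a"
  then obtain af bf b where f: "WD f af bf" and h: "WD h a b" unfolding WDx_def WDa_def by blast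
  show ?thesis using wirtinger_WD[OF WD_mult[OF f h]] wirtinger_WD[OF f] by simp
qed

lemma veronese_eq: "k \<le> n \<Longrightarrow> veronese n k = (\<lambda>z. cc k z \<cdot>\<^sub>v gv n k z)"
proof (induction k)
  case 0
  show ?case by (rule ext) (auto simp: cc_def gv_def Gk_0 G0_def sb_def)
next
  case (Suc k)
  then have kn: "k < n" by simp
  have IH: "veronese n k = (\<lambda>z. cc k z \<cdot>\<^sub>v gv n k z)" using Suc by simp
  show ?case
  proof (rule ext)
    fix z
    define u where "u = gv n k z"
    have N: "vnorm2 u \<noteq> 0" unfolding u_def vnorm2_gv using nm_ne0[of k n z] kn by simp
    have W: "wirtinger_vec (Suc n) (veronese n k) z $ j =
        (cc k z * alpha n z + wirtinger (cc k) z) * gz n k z j + cc (Suc k) z * gz n (Suc k) z j"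
      if j: "j < Suc n" for j
    proof -
      have "wirtinger_vec (Suc n) (veronese n k) z $ j = wirtinger (\<lambda>w. cc k w * gz n k w j) z"
        unfolding wirtinger_vec_def IH using j by (simp add: gv_def)
      also have "\<dots> = cc k z * Dk n k z j + wirtinger (cc k) z * gz n k z j"
        by (rule wirtinger_prod[OF WDx_cc WDa_g])
      finally show ?thesis unfolding Dk_rel cc_def by (simp add: algebra_simps)
    qed
    show "veronese n (Suc k) z = cc (Suc k) z \<cdot>\<^sub>v gv n (Suc k) z"
    proof (rule eq_vecI)
      fix i assume "i < dim_vec (cc (Suc k) z \<cdot>\<^sub>v gv n (Suc k) z)"
      then have i: "i < Suc n" by simp
      have "veronese n (Suc k) z = (1\<^sub>m (dim_vec u) - proj u) *\<^sub>v wirtinger_vec (n + 1) (veronese n k) z"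
        by (simp add: IH u_def proj_smult[OF cc_ne0])
      then have "veronese n (Suc k) z $ i = wirtinger_vec (n + 1) (veronese n k) z $ i
          - u $ i * (\<Sum>j<dim_vec u. cnj (u $ j) * wirtinger_vec (n + 1) (veronese n k) z $ j) / vnorm2 u"
        using one_minus_proj_mv[OF _ N, of "wirtinger_vec (n + 1) (veronese n k) z" i] i
        by (simp add: u_def wirtinger_vec_def)
      also have "(\<Sum>j<dim_vec u. cnj (u $ j) * wirtinger_vec (n + 1) (veronese n k) z $ j)
          = (\<Sum>j<Suc n. (cc k z * alpha n z + wirtinger (cc k) z) * (cnj (gz n k z j) * gz n k z j)
            + cc (Suc k) z * (cnj (gz n k z j) * gz n (Suc k) z j))"
        unfolding u_def by (rule sum.cong) (auto simp: W gv_def algebra_simps)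
      also have "\<dots> = (cc k z * alpha n z + wirtinger (cc k) z) * vnorm2 u
            + cc (Suc k) z * ip n (gz n k z) (gz n (Suc k) z)"
        unfolding vnorm2_gv u_def ip_def by (simp add: sum.distrib sum_distrib_left del: sum.lessThan_Suc)
      also have "ip n (gz n k z) (gz n (Suc k) z) = 0" by (rule orth)
      finally show "veronese n (Suc k) z $ i = (cc (Suc k) z \<cdot>\<^sub>v gv n (Suc k) z) $ i"
        using N i by (simp add: W u_def gv_def)
    next
      show "dim_vec (veronese n (Suc k) z) = dim_vec (cc (Suc k) z \<cdot>\<^sub>v gv n (Suc k) z)"
        by (simp add: IH)
    qed
  qed
qed

lemma dims_sigma[simp]:
  "dim_row (sigma_z n) = Suc n" "dim_col (sigma_z n) = Suc n"
  "dim_row (sigma_plus n) = Suc n" "dim_col (sigma_plus n) = Suc n"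
  "dim_row (sigma_minus n) = Suc n" "dim_col (sigma_minus n) = Suc n"
  by (simp_all add: sigma_z_def sigma_plus_def sigma_minus_def)

lemma dims_S[simp]:
  "dim_row (S_plus n z) = Suc n" "dim_col (S_plus n z) = Suc n"
  "dim_row (S_minus n z) = Suc n" "dim_col (S_minus n z) = Suc n"
  by (simp_all add: S_plus_def S_minus_def)

lemma sz_sum: "i < Suc n \<Longrightarrow> (\<Sum>j<Suc n. sigma_z n $$ (i, j) * v j) = zz n v i"
proof -
  assume i: "i < Suc n"
  have "(\<Sum>j<Suc n. sigma_z n $$ (i, j) * v j) = (\<Sum>j<Suc n. if j = i then (of_nat n / 2 - of_nat i) * v j else 0)"
    using i by (intro sum.cong) (auto simp: sigma_z_def of_real_diff of_real_divide)
  also have "\<dots> = zz n v i" using i by (simp add: zz_def)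
  finally show ?thesis .
qed

lemma sp_sum: "i < Suc n \<Longrightarrow> (\<Sum>j<Suc n. sigma_plus n $$ (i, j) * v j) = up n v i"
proof -
  assume i: "i < Suc n"
  have "(\<Sum>j<Suc n. sigma_plus n $$ (i, j) * v j) = (\<Sum>j<Suc n. if j = Suc i then sq n i * v j else 0)"
    using i by (intro sum.cong) (auto simp: sigma_plus_def sq_def Suc_diff_Suc mult.commute)
  also have "\<dots> = up n v i" using i by (cases "i = n") (auto simp: up_def)
  finally show ?thesis .
qed

lemma sm_sum: "i < Suc n \<Longrightarrow> (\<Sum>j<Suc n. sigma_minus n $$ (i, j) * v j) = dn n v i"
proof -
  assume i: "i < Suc n"
  have "(\<Sum>j<Suc n. sigma_minus n $$ (i, j) * v j) = (\<Sum>j<Suc n. if j = i - 1 \<and> 0 < i then sqd n i * v j else 0)"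
    using i by (intro sum.cong) (auto simp: sigma_minus_def sqd_def Suc_diff_le)
  also have "\<dots> = dn n v i" using i by (cases i) (auto simp: dn_def)
  finally show ?thesis .
qed

definition qq :: "complex \<Rightarrow> complex" where "qq z = 1 + z * cnj z"

lemma S_plus_idx: "i < Suc n \<Longrightarrow> j < Suc n \<Longrightarrow> S_plus n z $$ (i, j) =
   1 / qq z * (2 * cnj z * sigma_z n $$ (i, j) - sigma_minus n $$ (i, j) + (cnj z)^2 * sigma_plus n $$ (i, j))"
  unfolding S_plus_def qq_def by simp

lemma S_minus_idx: "i < Suc n \<Longrightarrow> j < Suc n \<Longrightarrow> S_minus n z $$ (i, j) =
   1 / qq z * (2 * z * sigma_z n $$ (i, j) + z^2 * sigma_minus n $$ (i, j) - sigma_plus n $$ (i, j))"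
  unfolding S_minus_def qq_def by simp

lemma S_plus_mv: "S_plus n z *\<^sub>v vec (Suc n) v = (1 / qq z) \<cdot>\<^sub>v vec (Suc n) (Top n (cnj z) v)"
proof (rule eq_vecI)
  fix i assume "i < dim_vec ((1 / qq z) \<cdot>\<^sub>v vec (Suc n) (Top n (cnj z) v))"
  then have i: "i < Suc n" by simp
  have "(S_plus n z *\<^sub>v vec (Suc n) v) $ i = (\<Sum>j<Suc n. S_plus n z $$ (i, j) * v j)"
    using i by (subst mv_index) (auto intro!: sum.cong)
  also have "\<dots> = 1 / qq z * (2 * cnj z * (\<Sum>j<Suc n. sigma_z n $$ (i, j) * v j)
     - (\<Sum>j<Suc n. sigma_minus n $$ (i, j) * v j) + (cnj z)^2 * (\<Sum>j<Suc n. sigma_plus n $$ (i, j) * v j))"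
    using i by (simp add: S_plus_idx sum_distrib_left sum.distrib sum_subtractf algebra_simps del: sum.lessThan_Suc)
  also have "\<dots> = ((1 / qq z) \<cdot>\<^sub>v vec (Suc n) (Top n (cnj z) v)) $ i"
    using i by (simp add: sz_sum sp_sum sm_sum Top_def del: sum.lessThan_Suc)
  finally show "(S_plus n z *\<^sub>v vec (Suc n) v) $ i = ((1 / qq z) \<cdot>\<^sub>v vec (Suc n) (Top n (cnj z) v)) $ i" .
qed simp

lemma S_minus_mv: "S_minus n z *\<^sub>v vec (Suc n) v = (1 / qq z) \<cdot>\<^sub>v vec (Suc n) (Rop n z v)"
proof (rule eq_vecI)
  fix i assume "i < dim_vec ((1 / qq z) \<cdot>\<^sub>v vec (Suc n) (Rop n z v))"
  then have i: "i < Suc n" by simp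
  have "(S_minus n z *\<^sub>v vec (Suc n) v) $ i = (\<Sum>j<Suc n. S_minus n z $$ (i, j) * v j)"
    using i by (subst mv_index) (auto intro!: sum.cong)
  also have "\<dots> = 1 / qq z * (2 * z * (\<Sum>j<Suc n. sigma_z n $$ (i, j) * v j)
     + z^2 * (\<Sum>j<Suc n. sigma_minus n $$ (i, j) * v j) - (\<Sum>j<Suc n. sigma_plus n $$ (i, j) * v j))"
    using i by (simp add: S_minus_idx sum_distrib_left sum.distrib sum_subtractf algebra_simps del: sum.lessThan_Suc)
  also have "\<dots> = ((1 / qq z) \<cdot>\<^sub>v vec (Suc n) (Rop n z v)) $ i"
    using i by (simp add: sz_sum sp_sum sm_sum Rop_def del: sum.lessThan_Suc)
  finally show "(S_minus n z *\<^sub>v vec (Suc n) v) $ i = ((1 / qq z) \<cdot>\<^sub>v vec (Suc n) (Rop n z v)) $ i" .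
qed simp

lemma cnj_qq[simp]: "cnj (qq z) = qq z" unfolding qq_def by (simp add: mult.commute)

lemma S_adj: "i < Suc n \<Longrightarrow> j < Suc n \<Longrightarrow> S_minus n z $$ (i, j) = cnj (S_plus n z $$ (j, i))"
  by (simp add: S_plus_idx S_minus_idx sigma_z_def sigma_plus_def sigma_minus_def)

lemma S_adj': "i < Suc n \<Longrightarrow> j < Suc n \<Longrightarrow> S_plus n z $$ (i, j) = cnj (S_minus n z $$ (j, i))"
  using S_adj[of j n i z] by simp

lemma APB_idx:
  assumes A: "dim_row A = Suc n" "dim_col A = Suc n" and B: "dim_row B = Suc n" "dim_col B = Suc n"
    and adj: "\<And>m j. m < Suc n \<Longrightarrow> j < Suc n \<Longrightarrow> B $$ (m, j) = cnj (A $$ (j, m))"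
    and u: "dim_vec u = Suc n" and i: "i < Suc n" and j: "j < Suc n"
  shows "(A * proj u * B) $$ (i, j) = (A *\<^sub>v u) $ i * cnj ((A *\<^sub>v u) $ j) / vnorm2 u"
proof -
  have Au: "(A *\<^sub>v u) $ i' = (\<Sum>l<Suc n. A $$ (i', l) * u $ l)" if "i' < Suc n" for i'
    using that A u by (subst mv_index) auto
  have AP: "(A * proj u) $$ (i, m) = (A *\<^sub>v u) $ i * cnj (u $ m) / vnorm2 u" if m: "m < Suc n" for m
  proof -
    have "(A * proj u) $$ (i, m) = (\<Sum>l<Suc n. A $$ (i, l) * proj u $$ (l, m))"
      using A u i m by (subst mm_index) auto
    also have "\<dots> = (\<Sum>l<Suc n. A $$ (i, l) * u $ l) * cnj (u $ m) / vnorm2 u"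
      unfolding sum_distrib_right sum_divide_distrib
      using u m by (intro sum.cong) (auto simp: proj_def)
    finally show ?thesis using Au[OF i] by simp
  qed
  have "(A * proj u * B) $$ (i, j) = (\<Sum>m<Suc n. (A * proj u) $$ (i, m) * B $$ (m, j))"
    using A B u i j by (subst mm_index) auto
  also have "\<dots> = (\<Sum>m<Suc n. (A *\<^sub>v u) $ i / vnorm2 u * cnj (A $$ (j, m) * u $ m))"
    using j by (intro sum.cong) (auto simp: AP adj)
  also have "\<dots> = (A *\<^sub>v u) $ i * cnj ((A *\<^sub>v u) $ j) / vnorm2 u"
    unfolding Au[OF j] cnj_sum sum_distrib_left[symmetric] by simp
  finally show ?thesis .
qed

lemma final_gen:
  assumes A: "dim_row A = Suc n" "dim_col A = Suc n" and B: "dim_row B = Suc n" "dim_col B = Suc n"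
    and adj: "\<And>m j. m < Suc n \<Longrightarrow> j < Suc n \<Longrightarrow> B $$ (m, j) = cnj (A $$ (j, m))"
    and u: "dim_vec u = Suc n" and u': "dim_vec u' = Suc n"
    and Au: "A *\<^sub>v u = c \<cdot>\<^sub>v u'" and c: "c \<noteq> 0" and N: "vnorm2 u \<noteq> 0" and N': "vnorm2 u' \<noteq> 0"
  shows "mtrace (A * proj u * B) \<noteq> 0 \<and> proj u' = (1 / mtrace (A * proj u * B)) \<cdot>\<^sub>m (A * proj u * B)"
proof -
  have M: "(A * proj u * B) $$ (i, j) = c * cnj c * (u' $ i * cnj (u' $ j)) / vnorm2 u"
    if "i < Suc n" "j < Suc n" for i j
    using APB_idx[OF A B adj u that] that u' unfolding Au by simp
  have dM: "dim_row (A * proj u * B) = Suc n" "dim_col (A * proj u * B) = Suc n" using A B by auto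
  have V: "vnorm2 u' = (\<Sum>i<Suc n. cnj (u' $ i) * u' $ i)" by (simp add: vnorm2_def u')
  have tr: "mtrace (A * proj u * B) = c * cnj c * vnorm2 u' / vnorm2 u"
    unfolding mtrace_def dM V
    by (simp add: M sum_distrib_left sum_divide_distrib ac_simps del: sum.lessThan_Suc)
  have cc: "c * cnj c \<noteq> 0" using c by simp
  show ?thesis
  proof
    show "mtrace (A * proj u * B) \<noteq> 0" unfolding tr using cc N N' by simp
    show "proj u' = (1 / mtrace (A * proj u * B)) \<cdot>\<^sub>m (A * proj u * B)"
    proof (rule eq_matI)
      fix i j assume "i < dim_row ((1 / mtrace (A * proj u * B)) \<cdot>\<^sub>m (A * proj u * B))"
        "j < dim_col ((1 / mtrace (A * proj u * B)) \<cdot>\<^sub>m (A * proj u * B))"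
      then have ij: "i < Suc n" "j < Suc n" using dM by auto
      show "proj u' $$ (i, j) = ((1 / mtrace (A * proj u * B)) \<cdot>\<^sub>m (A * proj u * B)) $$ (i, j)"
      proof -
        have "((1 / mtrace (A * proj u * B)) \<cdot>\<^sub>m (A * proj u * B)) $$ (i, j)
            = 1 / mtrace (A * proj u * B) * (A * proj u * B) $$ (i, j)"
          by (rule index_smult_mat(1)) (use ij dM in auto)
        then show ?thesis unfolding M[OF ij] tr using ij u' cc N N' by (simp add: proj_def field_simps)
      qed
    qed (use A B in \<open>auto simp: dM u' proj_def\<close>)
  qed
qed

lemma P_eq: "k \<le> n \<Longrightarrow> P n k z = proj (gv n k z)"
  unfolding P_def veronese_eq by (simp add: proj_smult cc_ne0)

lemma gv_ne0: "k \<le> n \<Longrightarrow> vnorm2 (gv n k z) \<noteq> 0"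
  unfolding vnorm2_gv using nm_ne0 by blast

lemma qq_ne0: "qq z \<noteq> 0" unfolding qq_def by (rule q_ne0)

lemma Splus_gv: "S_plus n z *\<^sub>v gv n k z = (1 / qq z) \<cdot>\<^sub>v gv n (Suc k) z"
  unfolding gv_def S_plus_mv Gk_Suc ..

lemma Sminus_gv: "S_minus n z *\<^sub>v gv n (Suc k) z = (mu n k z (cnj z) / qq z) \<cdot>\<^sub>v gv n k z"
proof -
  have e: "Rop n z (gz n (Suc k) z) = (\<lambda>i. mu n k z (cnj z) * gz n k z i)" using R_Gk by auto
  show ?thesis unfolding gv_def S_minus_mv e by (rule eq_vecI) auto
qed

theorem mainTheorem9:
  fixes n :: nat and z :: complex
  assumes "0 < n"
  shows "(\<forall>k<n.
            mtrace (S_plus n z * P n k z * S_minus n z) \<noteq> 0 \<and>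
            P n (Suc k) z = (1 / mtrace (S_plus n z * P n k z * S_minus n z))
                              \<cdot>\<^sub>m (S_plus n z * P n k z * S_minus n z))
       \<and> (\<forall>k. 1 \<le> k \<and> k \<le> n \<longrightarrow>
            mtrace (S_minus n z * P n k z * S_plus n z) \<noteq> 0 \<and>
            P n (k - 1) z = (1 / mtrace (S_minus n z * P n k z * S_plus n z))
                              \<cdot>\<^sub>m (S_minus n z * P n k z * S_plus n z))"
proof (rule conjI)
  show "\<forall>k<n.
            mtrace (S_plus n z * P n k z * S_minus n z) \<noteq> 0 \<and>
            P n (Suc k) z = (1 / mtrace (S_plus n z * P n k z * S_minus n z))
                              \<cdot>\<^sub>m (S_plus n z * P n k z * S_minus n z)"
  proof (intro allI impI)
    fix k assume k: "k < n"
    have e1: "P n k z = proj (gv n k z)" "P n (Suc k) z = proj (gv n (Suc k) z)"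
      using k by (simp_all add: P_eq)
    show "mtrace (S_plus n z * P n k z * S_minus n z) \<noteq> 0 \<and>
            P n (Suc k) z = (1 / mtrace (S_plus n z * P n k z * S_minus n z))
                              \<cdot>\<^sub>m (S_plus n z * P n k z * S_minus n z)"
      unfolding e1 using k
      by (intro final_gen[where c = "1 / qq z"]) (auto simp: S_adj Splus_gv qq_ne0 gv_ne0)
  qed
  show "\<forall>k. 1 \<le> k \<and> k \<le> n \<longrightarrow>
            mtrace (S_minus n z * P n k z * S_plus n z) \<noteq> 0 \<and>
            P n (k - 1) z = (1 / mtrace (S_minus n z * P n k z * S_plus n z))
                              \<cdot>\<^sub>m (S_minus n z * P n k z * S_plus n z)"
  proof (intro allI impI)
    fix k assume k: "1 \<le> k \<and> k \<le> n"
    then obtain j where j: "k = Suc j" by (cases k) auto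
    with k have jn: "j < n" by simp
    have e1: "P n k z = proj (gv n (Suc j) z)" "P n (k - 1) z = proj (gv n j z)"
      using jn j by (simp_all add: P_eq)
    show "mtrace (S_minus n z * P n k z * S_plus n z) \<noteq> 0 \<and>
            P n (k - 1) z = (1 / mtrace (S_minus n z * P n k z * S_plus n z))
                              \<cdot>\<^sub>m (S_minus n z * P n k z * S_plus n z)"
      unfolding e1 unfolding j using jn
      by (intro final_gen[where c = "mu n j z (cnj z) / qq z"])
         (auto simp: S_adj' Sminus_gv qq_ne0 gv_ne0 mu_ne0)
  qed
qed
end
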